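(* Let $\Sigma=(\tilde{\mathbf x},\tilde B(Q))$ be a $(G,\psi)$-admissible seed, and let $K$ be a mutable $G$-orbit. If the quiver $\mu_K(Q)$ is $G$-admissible, then the seed $\mu_K(\Sigma)$ is $(G,\psi)$-admissible, and $(\mu_K(\Sigma))^G=\mu_K(\Sigma^G)$.
   Context: $Q$ is a quiver with vertices $1,\dots,m$, mutable $1,\dots,n$, frozen $n+1,\dots,m$; $\tilde B(Q)=(b_{ij})$ is the $m\times n$ matrix with $b_{ij}$ = #arrows $i\to j$ minus #arrows $j\to i$. A seed $(\tilde{\mathbf x},\tilde B)$ in a field $\mathcal F$ consists of a free generating tuple $\tilde{\mathbf x}=(x_1,\dots,x_m)$ of $\mathcal F$ and such a matrix; mutation at mutable $k$ replaces $\tilde B$ by its matrix mutation ($b'_{ij}=-b_{ij}$ if $k\in\{i,j\}$, else $b_{ij}+\mathrm{sgn}(b_{ik})\max(b_{ik}b_{kj},0)$) and $x_k$ by $x_k'=(\prod_{b_{ik}>0}x_i^{b_{ik}}+\prod_{b_{ik}<0}x_i^{-b_{ik}})/x_k$ (products over $i\le m$). A group $G$ acts on $\{1,\dots,m\}$ mapping $\{1,\dots,n\}$ to itself; $i\sim i'$ means same orbit; $m^G$ is the number of orbits. $Q$ is $G$-admissible if: (1) $i\sim i'$ implies $i$ mutable iff $i'$ mutable; (2) $b_{ij}=b_{g(i),g(j)}$; (3) $b_{ii'}=0$ for mutable $i\sim i'$; (4) $b_{ij}b_{i'j}\ge0$ for $i\sim i'$, $j$ mutable. Then $\tilde B^G=(b^G_{IJ})$,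 rows indexed by orbits and columns by mutable orbits, $b^G_{IJ}=\sum_{i\in I}b_{ij}$ ($j\in J$ arbitrary). $\mathcal F$ (resp. $\mathcal F^G$) is a field of rational functions in $m$ (resp. $m^G$) variables, $\mathcal F_{\mathrm{sf}}$, $\mathcal F^G_{\mathrm{sf}}$ the semifields of subtraction-free rational expressions, and $\psi:\mathcal F_{\mathrm{sf}}\to\mathcal F^G_{\mathrm{sf}}$ a surjective semifield homomorphism. A seed $\Sigma=(\tilde{\mathbf x},\tilde B(Q))$ in $\mathcal F$ is $(G,\psi)$-admissible if $Q$ is $G$-admissible and $\psi(x_i)=\psi(x_{i'})$ whenever $i\sim i'$; its folded seed is $\Sigma^G=(\tilde{\mathbf x}^G,\tilde B^G)$ in $\mathcal F^G$ with $\tilde{\mathbf x}^G=(x_I)$, $x_I=\psi(x_i)$ for $i\in I$. For a mutable orbit $K$, $\mu_K$ on $\Sigma$ denotes the composition of the (commuting) mutations at all $k\in K$, and on $\Sigma^G$ the single mutation at the index $K$. *)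

theory Defs
  imports Main "HOL-Algebra.Group_Action"
begin

text \<open>A polynomial in the variables indexed by 1..m with coefficients in a set k:
  a finitely supported coefficient function on exponent vectors supported in 1..m.\<close>
definition is_poly :: "'a::field set \<Rightarrow> nat \<Rightarrow> ((nat \<Rightarrow> nat) \<Rightarrow> 'a) \<Rightarrow> bool" where
  "is_poly k m c \<longleftrightarrow> finite {e. c e \<noteq> 0} \<and>
     (\<forall>e. c e \<noteq> 0 \<longrightarrow> c e \<in> k \<and> (\<forall>i. i \<notin> {1..m} \<longrightarrow> e i = 0))"

definition poly_eval :: "((nat \<Rightarrow> nat) \<Rightarrow> 'a::field) \<Rightarrow> nat \<Rightarrow> (nat \<Rightarrow> 'a) \<Rightarrow> 'a" where
  "poly_eval c m x = (\<Sum>e\<in>{e. c e \<noteq> 0}. c e * (\<Prod>i\<in>{1..m}. x i ^ e i))"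

definition is_subfield :: "'a::field set \<Rightarrow> bool" where
  "is_subfield k \<longleftrightarrow> 0 \<in> k \<and> 1 \<in> k \<and> (\<forall>a\<in>k. \<forall>b\<in>k. a + b \<in> k \<and> a - b \<in> k \<and> a * b \<in> k)
     \<and> (\<forall>a\<in>k. inverse a \<in> k)"

definition free_generating :: "'a::field set \<Rightarrow> nat \<Rightarrow> (nat \<Rightarrow> 'a) \<Rightarrow> bool" where
  "free_generating k m x \<longleftrightarrow>
     (\<forall>c. is_poly k m c \<and> poly_eval c m x = 0 \<longrightarrow> (\<forall>e. c e = 0)) \<and>
     (\<forall>y. \<exists>p q. is_poly k m p \<and> is_poly k m q \<and> poly_eval q m x \<noteq> 0 \<and>
                y = poly_eval p m x / poly_eval q m x)"

definition rational_function_field :: "'a::field set \<Rightarrow> nat \<Rightarrow> (nat \<Rightarrow> 'a) \<Rightarrow> bool" where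
  "rational_function_field k m u \<longleftrightarrow> is_subfield k \<and> free_generating k m u"

text \<open>Semifield of subtraction-free rational expressions in u_1..u_m (inside the ambient field).\<close>
inductive_set sf_closure :: "nat \<Rightarrow> (nat \<Rightarrow> 'a::field) \<Rightarrow> 'a set" for m u where
  gen: "i \<in> {1..m} \<Longrightarrow> u i \<in> sf_closure m u"
| add: "a \<in> sf_closure m u \<Longrightarrow> b \<in> sf_closure m u \<Longrightarrow> a + b \<in> sf_closure m u"
| mult: "a \<in> sf_closure m u \<Longrightarrow> b \<in> sf_closure m u \<Longrightarrow> a * b \<in> sf_closure m u"
| divide: "a \<in> sf_closure m u \<Longrightarrow> b \<in> sf_closure m u \<Longrightarrow> a / b \<in> sf_closure m u"

definition semifield_hom_on :: "'a::field set \<Rightarrow> ('a \<Rightarrow> 'b::field) \<Rightarrow> bool" where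
  "semifield_hom_on S \<psi> \<longleftrightarrow> (\<forall>a\<in>S. \<forall>b\<in>S.
      \<psi> (a + b) = \<psi> a + \<psi> b \<and> \<psi> (a * b) = \<psi> a * \<psi> b \<and> \<psi> (a / b) = \<psi> a / \<psi> b)"

text \<open>A quiver on vertices 1..m given by arrow counts Q i j = number of arrows i -> j;
  no loops and no oriented 2-cycles.\<close>
definition is_quiver :: "nat \<Rightarrow> (nat \<Rightarrow> nat \<Rightarrow> nat) \<Rightarrow> bool" where
  "is_quiver m Q \<longleftrightarrow> (\<forall>i j. (i \<notin> {1..m} \<or> j \<notin> {1..m}) \<longrightarrow> Q i j = 0) \<and>
     (\<forall>i. Q i i = 0) \<and> (\<forall>i j. Q i j = 0 \<or> Q j i = 0)"

text \<open>b_ij = #arrows i->j minus #arrows j->i (only entries with i<=m, j<=n mutable matter).\<close>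
definition Btil :: "(nat \<Rightarrow> nat \<Rightarrow> nat) \<Rightarrow> nat \<Rightarrow> nat \<Rightarrow> int" where
  "Btil Q i j = int (Q i j) - int (Q j i)"

text \<open>Quiver mutation at k: add i->j for each path i->k->j, reverse arrows at k,
  remove a maximal collection of oriented 2-cycles.\<close>
definition quiver_mut :: "nat \<Rightarrow> (nat \<Rightarrow> nat \<Rightarrow> nat) \<Rightarrow> nat \<Rightarrow> nat \<Rightarrow> nat" where
  "quiver_mut k Q i j =
     (if i = k \<or> j = k then Q j i
      else (let c = Q i j + Q i k * Q k j; d = Q j i + Q j k * Q k i in c - min c d))"

definition mat_mut :: "'i \<Rightarrow> ('i \<Rightarrow> 'i \<Rightarrow> int) \<Rightarrow> 'i \<Rightarrow> 'i \<Rightarrow> int" where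
  "mat_mut k B i j =
     (if i = k \<or> j = k then - B i j
      else B i j + sgn (B i k) * max (B i k * B k j) 0)"

definition clus_mut :: "'i set \<Rightarrow> 'i \<Rightarrow> ('i \<Rightarrow> 'i \<Rightarrow> int) \<Rightarrow> ('i \<Rightarrow> 'a::field) \<Rightarrow> 'i \<Rightarrow> 'a" where
  "clus_mut Ix k B x = x(k :=
     ((\<Prod>i\<in>{i\<in>Ix. B i k > 0}. x i ^ nat (B i k)) +
      (\<Prod>i\<in>{i\<in>Ix. B i k < 0}. x i ^ nat (- B i k))) / x k)"

definition seed_mut :: "'i set \<Rightarrow> 'i \<Rightarrow> ('i \<Rightarrow> 'a::field) \<times> ('i \<Rightarrow> 'i \<Rightarrow> int)
     \<Rightarrow> ('i \<Rightarrow> 'a) \<times> ('i \<Rightarrow> 'i \<Rightarrow> int)" where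
  "seed_mut Ix k S = (clus_mut Ix k (snd S) (fst S), mat_mut k (snd S))"

definition seed_mut_set :: "nat set \<Rightarrow> nat set \<Rightarrow> (nat \<Rightarrow> 'a::field) \<times> (nat \<Rightarrow> nat \<Rightarrow> int)
     \<Rightarrow> (nat \<Rightarrow> 'a) \<times> (nat \<Rightarrow> nat \<Rightarrow> int)" where
  "seed_mut_set Ix K S = foldl (\<lambda>S' k. seed_mut Ix k S') S (sorted_list_of_set K)"

definition quiver_mut_set :: "nat set \<Rightarrow> (nat \<Rightarrow> nat \<Rightarrow> nat) \<Rightarrow> nat \<Rightarrow> nat \<Rightarrow> nat" where
  "quiver_mut_set K Q = foldl (\<lambda>Q' k. quiver_mut k Q') Q (sorted_list_of_set K)"

definition G_admissible :: "('g, 'c) monoid_scheme \<Rightarrow> ('g \<Rightarrow> nat \<Rightarrow> nat) \<Rightarrow> nat \<Rightarrow> nat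
     \<Rightarrow> (nat \<Rightarrow> nat \<Rightarrow> int) \<Rightarrow> bool" where
  "G_admissible G \<phi> m n B \<longleftrightarrow>
     (\<forall>i\<in>{1..m}. \<forall>i'\<in>orbit G \<phi> i. (i \<le> n \<longleftrightarrow> i' \<le> n)) \<and>
     (\<forall>g\<in>carrier G. \<forall>i\<in>{1..m}. \<forall>j\<in>{1..n}. B i j = B (\<phi> g i) (\<phi> g j)) \<and>
     (\<forall>i\<in>{1..n}. \<forall>i'\<in>orbit G \<phi> i. B i i' = 0) \<and>
     (\<forall>i\<in>{1..m}. \<forall>i'\<in>orbit G \<phi> i. \<forall>j\<in>{1..n}. B i j * B i' j \<ge> 0)"

definition quiver_G_admissible :: "('g, 'c) monoid_scheme \<Rightarrow> ('g \<Rightarrow> nat \<Rightarrow> nat) \<Rightarrow> nat \<Rightarrow> nat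
     \<Rightarrow> (nat \<Rightarrow> nat \<Rightarrow> nat) \<Rightarrow> bool" where
  "quiver_G_admissible G \<phi> m n Q \<longleftrightarrow> G_admissible G \<phi> m n (Btil Q)"

text \<open>(G,psi)-admissibility of a seed (x, B) with B = B(Q); psi is only defined on F_sf,
  so the cluster variables are required to lie in F_sf.\<close>
definition Gpsi_admissible :: "('g, 'c) monoid_scheme \<Rightarrow> ('g \<Rightarrow> nat \<Rightarrow> nat) \<Rightarrow> nat \<Rightarrow> nat
     \<Rightarrow> 'a::field set \<Rightarrow> ('a \<Rightarrow> 'b::field) \<Rightarrow> (nat \<Rightarrow> 'a) \<times> (nat \<Rightarrow> nat \<Rightarrow> int) \<Rightarrow> bool" where
  "Gpsi_admissible G \<phi> m n Fsf \<psi> S \<longleftrightarrow>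
     G_admissible G \<phi> m n (snd S) \<and> (\<forall>i\<in>{1..m}. fst S i \<in> Fsf) \<and>
     (\<forall>i\<in>{1..m}. \<forall>i'\<in>orbit G \<phi> i. \<psi> (fst S i) = \<psi> (fst S i'))"

text \<open>Folded seed, indexed by orbits: b^G_IJ = sum_{i in I} b_ij (j in J), x_I = psi(x_i) (i in I).\<close>
definition fold_mat :: "(nat \<Rightarrow> nat \<Rightarrow> int) \<Rightarrow> nat set \<Rightarrow> nat set \<Rightarrow> int" where
  "fold_mat B I J = (\<Sum>i\<in>I. B i (SOME j. j \<in> J))"

definition fold_clus :: "('a \<Rightarrow> 'b) \<Rightarrow> (nat \<Rightarrow> 'a) \<Rightarrow> nat set \<Rightarrow> 'b" where
  "fold_clus \<psi> x I = \<psi> (x (SOME i. i \<in> I))"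

definition fold_seed :: "('a \<Rightarrow> 'b) \<Rightarrow> (nat \<Rightarrow> 'a) \<times> (nat \<Rightarrow> nat \<Rightarrow> int)
     \<Rightarrow> (nat set \<Rightarrow> 'b) \<times> (nat set \<Rightarrow> nat set \<Rightarrow> int)" where
  "fold_seed \<psi> S = (fold_clus \<psi> (fst S), fold_mat (snd S))"

definition folded_seed_eq :: "nat set set \<Rightarrow> nat set set
     \<Rightarrow> (nat set \<Rightarrow> 'b) \<times> (nat set \<Rightarrow> nat set \<Rightarrow> int)
     \<Rightarrow> (nat set \<Rightarrow> 'b) \<times> (nat set \<Rightarrow> nat set \<Rightarrow> int) \<Rightarrow> bool" where
  "folded_seed_eq Orbs MutOrbs S T \<longleftrightarrow>
     (\<forall>I\<in>Orbs. fst S I = fst T I) \<and> (\<forall>I\<in>Orbs. \<forall>J\<in>MutOrbs. snd S I J = snd T I J)"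

end

theory Submission
  imports Defs
begin

definition nocyc :: "(nat \<Rightarrow> nat \<Rightarrow> nat) \<Rightarrow> bool" where
  "nocyc Q \<longleftrightarrow> (\<forall>i j. Q i j = 0 \<or> Q j i = 0)"

lemma nocyc_mut: "nocyc Q \<Longrightarrow> nocyc (quiver_mut k Q)"
  unfolding nocyc_def quiver_mut_def Let_def by (auto simp: min_def)

lemma Btil_mut:
  assumes "nocyc Q"
  shows "Btil (quiver_mut k Q) = mat_mut k (Btil Q)"
proof (intro ext)
  fix i j
  show "Btil (quiver_mut k Q) i j = mat_mut k (Btil Q) i j"
  proof (cases "i = k \<or> j = k")
    case True thus ?thesis unfolding Btil_def quiver_mut_def mat_mut_def by auto
  next
    case False
    have c1: "Q i k = 0 \<or> Q k i = 0" "Q k j = 0 \<or> Q j k = 0" using assms unfolding nocyc_def by auto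
    have "int (Q i j + Q i k * Q k j - min (Q i j + Q i k * Q k j) (Q j i + Q j k * Q k i))
        - int (Q j i + Q j k * Q k i - min (Q j i + Q j k * Q k i) (Q i j + Q i k * Q k j))
        = (int (Q i j) - int (Q j i)) + sgn (int (Q i k) - int (Q k i)) *
           max ((int (Q i k) - int (Q k i)) * (int (Q k j) - int (Q j k))) 0"
      using c1 by (auto simp: min_def max_def sgn_if zero_less_mult_iff mult_less_0_iff mult_le_0_iff)
    thus ?thesis using False unfolding Btil_def quiver_mut_def mat_mut_def Let_def
      by (auto simp: min.commute)
  qed
qed

lemma Btil_fold:
  "nocyc Q \<Longrightarrow> Btil (foldl (\<lambda>Q' k. quiver_mut k Q') Q L) = foldl (\<lambda>B k. mat_mut k B) (Btil Q) L"
  by (induction L arbitrary: Q) (auto simp: Btil_mut nocyc_mut)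

definition ff :: "int \<Rightarrow> int \<Rightarrow> int" where "ff b c = sgn b * max (b * c) 0"

lemma mat_fold:
  assumes "distinct L" "set L \<subseteq> K" "\<forall>a\<in>K. \<forall>b\<in>K. B a b = 0"
  shows "foldl (\<lambda>B k. mat_mut k B) B L = (\<lambda>i j. if i \<in> set L \<or> j \<in> set L then - B i j
           else B i j + (\<Sum>k\<in>set L. ff (B i k) (B k j)))"
  using assms(1,2)
proof (induction L rule: rev_induct)
  case Nil
  then show ?case by (auto simp: fun_eq_iff)
next
  case (snoc k1 L)
  define B' where "B' = foldl (\<lambda>B k. mat_mut k B) B L"
  have IH: "B' = (\<lambda>i j. if i \<in> set L \<or> j \<in> set L then - B i j
           else B i j + (\<Sum>k\<in>set L. ff (B i k) (B k j)))"
    using snoc unfolding B'_def by auto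
  have k1: "k1 \<notin> set L" "k1 \<in> K" "set L \<subseteq> K" using snoc.prems by auto
  have z: "\<And>a b. a \<in> K \<Longrightarrow> b \<in> K \<Longrightarrow> B a b = 0" using assms(3) by auto
  have zL: "\<And>a. a \<in> set L \<Longrightarrow> B a k1 = 0 \<and> B k1 a = 0" using z k1 by auto
  have s1: "(\<Sum>k\<in>set L. ff (B i k) (B k k1)) = 0" for i
    using zL by (auto simp: ff_def)
  have s2: "(\<Sum>k\<in>set L. ff (B k1 k) (B k j)) = 0" for j
    using zL by (auto simp: ff_def)
  have col: "B' i k1 = B i k1" for i
    using k1 zL s1 by (auto simp: IH)
  have row: "B' k1 j = (if j \<in> set L then - B k1 j else B k1 j)" for j
    using k1 zL s2 by (auto simp: IH)
  have gen: "B' i j = (if i \<in> set L \<or> j \<in> set L then - B i j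
           else B i j + (\<Sum>k\<in>set L. ff (B i k) (B k j)))" for i j
    using IH by simp
  show ?case
  proof (intro ext)
    fix i j
    show "foldl (\<lambda>B k. mat_mut k B) B (L @ [k1]) i j = (if i \<in> set (L @ [k1]) \<or> j \<in> set (L @ [k1]) then - B i j
           else B i j + (\<Sum>k\<in>set (L @ [k1]). ff (B i k) (B k j)))"
    proof -
      have e: "foldl (\<lambda>B k. mat_mut k B) B (L @ [k1]) i j = mat_mut k1 B' i j"
        by (simp add: B'_def)
      show ?thesis
      proof (cases "i = k1 \<or> j = k1")
        case True
        then show ?thesis unfolding e mat_mut_def using col row k1 z gen s1 s2
          by auto
      next
        case False
        then show ?thesis unfolding e mat_mut_def using col row k1 z gen s1 s2
          by (auto simp: ff_def sum.insert_if)
      qed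
    qed
  qed
qed

lemma seed_fold:
  assumes "distinct L" "set L \<subseteq> K" "\<forall>a\<in>K. \<forall>b\<in>K. B a b = 0"
  shows "foldl (\<lambda>S' k. seed_mut Ix k S') (x, B) L =
    ((\<lambda>i. if i \<in> set L then clus_mut Ix i B x i else x i), foldl (\<lambda>B k. mat_mut k B) B L)"
  using assms(1,2)
proof (induction L rule: rev_induct)
  case Nil
  then show ?case by (auto simp: fun_eq_iff)
next
  case (snoc k1 L)
  define B' where "B' = foldl (\<lambda>B k. mat_mut k B) B L"
  define x' where "x' = (\<lambda>i. if i \<in> set L then clus_mut Ix i B x i else x i)"
  have IH: "foldl (\<lambda>S' k. seed_mut Ix k S') (x, B) L = (x', B')"
    using snoc unfolding B'_def x'_def by auto
  have k1: "k1 \<notin> set L" "k1 \<in> K" "set L \<subseteq> K" "distinct L" using snoc.prems by auto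
  have z: "\<And>a b. a \<in> K \<Longrightarrow> b \<in> K \<Longrightarrow> B a b = 0" using assms(3) by auto
  have col: "B' i k1 = B i k1" for i
    using k1 z unfolding B'_def mat_fold[OF k1(4,3) assms(3)] by (auto simp: ff_def intro!: sum.neutral)
  have xs: "B i k1 \<noteq> 0 \<Longrightarrow> x' i = x i" for i
    using k1 z unfolding x'_def by auto
  have xk: "x' k1 = x k1" using k1 unfolding x'_def by auto
  have "clus_mut Ix k1 B' x' k1 = clus_mut Ix k1 B x k1"
    unfolding clus_mut_def using xs xk col
    by (auto intro!: arg_cong2[where f="(+)"] prod.cong arg_cong2[where f="(/)"])
  hence "clus_mut Ix k1 B' x' = (\<lambda>i. if i \<in> set (L @ [k1]) then clus_mut Ix i B x i else x i)"
    unfolding x'_def clus_mut_def by (auto simp: fun_eq_iff)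
  then show ?case using IH by (simp add: seed_mut_def B'_def)
qed

lemma ff_pos: "b \<ge> 0 \<Longrightarrow> ff b c = (if c \<ge> 0 then b * c else 0)"
  by (auto simp: ff_def sgn_if max_def mult_le_0_iff zero_le_mult_iff)
lemma ff_neg: "b \<le> 0 \<Longrightarrow> ff b c = (if c \<le> 0 then - (b * c) else 0)"
  by (auto simp: ff_def sgn_if max_def mult_le_0_iff zero_le_mult_iff)
lemma ff_pos2: "c \<ge> 0 \<Longrightarrow> ff b c = (if b \<ge> 0 then b * c else 0)"
  by (auto simp: ff_def sgn_if max_def mult_le_0_iff zero_le_mult_iff)
lemma ff_neg2: "c \<le> 0 \<Longrightarrow> ff b c = (if b \<le> 0 then - (b * c) else 0)"
  by (auto simp: ff_def sgn_if max_def mult_le_0_iff zero_le_mult_iff)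

lemma ff_sum1:
  assumes "finite A" "(\<forall>a\<in>A. h a \<ge> 0) \<or> (\<forall>a\<in>A. h a \<le> 0)"
  shows "(\<Sum>a\<in>A. ff (h a) c) = ff (\<Sum>a\<in>A. h a) c"
  using assms(2)
proof
  assume p: "\<forall>a\<in>A. h a \<ge> 0"
  hence "(\<Sum>a\<in>A. h a) \<ge> 0" by (simp add: sum_nonneg)
  thus ?thesis using p by (simp add: ff_pos sum_distrib_right)
next
  assume p: "\<forall>a\<in>A. h a \<le> 0"
  hence "(\<Sum>a\<in>A. h a) \<le> 0" by (simp add: sum_nonpos)
  thus ?thesis using p by (simp add: ff_neg sum_distrib_right sum_negf)
qed

lemma ff_sum2:
  assumes "finite A" "(\<forall>a\<in>A. h a \<ge> 0) \<or> (\<forall>a\<in>A. h a \<le> 0)"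
  shows "(\<Sum>a\<in>A. ff s (h a)) = ff s (\<Sum>a\<in>A. h a)"
  using assms(2)
proof
  assume p: "\<forall>a\<in>A. h a \<ge> 0"
  hence "(\<Sum>a\<in>A. h a) \<ge> 0" by (simp add: sum_nonneg)
  thus ?thesis using p by (simp add: ff_pos2 sum_distrib_left)
next
  assume p: "\<forall>a\<in>A. h a \<le> 0"
  hence "(\<Sum>a\<in>A. h a) \<le> 0" by (simp add: sum_nonpos)
  thus ?thesis using p by (simp add: ff_neg2 sum_distrib_left sum_negf)
qed

lemma nat_sum_signed:
  assumes "finite I" "(\<forall>i\<in>I. h i \<ge> 0) \<or> (\<forall>i\<in>I. h i \<le> 0)"
  shows "(\<Sum>i\<in>I. nat (h i)) = nat (\<Sum>i\<in>I. (h i :: int))"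
  using assms(2)
proof
  assume p: "\<forall>i\<in>I. h i \<ge> 0"
  have "int (\<Sum>i\<in>I. nat (h i)) = (\<Sum>i\<in>I. h i)" using p by (simp add: of_nat_sum)
  thus ?thesis by linarith
next
  assume p: "\<forall>i\<in>I. h i \<le> 0"
  hence "(\<Sum>i\<in>I. h i) \<le> 0" by (simp add: sum_nonpos)
  thus ?thesis using p by simp
qed

lemma prod_fold:
  fixes y :: "nat \<Rightarrow> 'b::comm_monoid_mult"
  assumes "finite Ix" "\<Union>Os = Ix" "\<forall>I\<in>Os. \<forall>J\<in>Os. I \<noteq> J \<longrightarrow> I \<inter> J = {}"
    "\<forall>I\<in>Os. \<forall>i\<in>I. y i = y' I" "\<forall>I\<in>Os. (\<forall>i\<in>I. h i \<ge> 0) \<or> (\<forall>i\<in>I. h i \<le> 0)"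
  shows "(\<Prod>i\<in>{i\<in>Ix. h i > 0}. y i ^ nat (h i)) = (\<Prod>I\<in>{I\<in>Os. (\<Sum>i\<in>I. h i) > 0}. y' I ^ nat (\<Sum>i\<in>I. h i))"
proof -
  have fO: "finite Os" using assms(1,2) by (metis Sup_upper finite_Pow_iff finite_subset subsetI PowI)
  have fI: "\<forall>I\<in>Os. finite I" using assms(1,2) by (metis Sup_upper finite_subset)
  have "(\<Prod>i\<in>{i\<in>Ix. h i > 0}. y i ^ nat (h i)) = (\<Prod>i\<in>Ix. y i ^ nat (h i))"
  proof (rule prod.mono_neutral_left)
    show "\<forall>i\<in>Ix - {i \<in> Ix. 0 < h i}. y i ^ nat (h i) = 1"
    proof
      fix i assume "i \<in> Ix - {i \<in> Ix. 0 < h i}"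
      hence "nat (h i) = 0" by auto
      thus "y i ^ nat (h i) = 1" by simp
    qed
  qed (use assms(1) in auto)
  also have "\<dots> = (\<Prod>I\<in>Os. \<Prod>i\<in>I. y i ^ nat (h i))"
    using prod.Union_disjoint[OF fI assms(3), of "\<lambda>i. y i ^ nat (h i)"] assms(2) by (simp add: o_def)
  also have "\<dots> = (\<Prod>I\<in>Os. y' I ^ nat (\<Sum>i\<in>I. h i))"
  proof (rule prod.cong[OF refl])
    fix I assume I: "I \<in> Os"
    have "(\<Prod>i\<in>I. y i ^ nat (h i)) = (\<Prod>i\<in>I. y' I ^ nat (h i))" using I assms(4) by auto
    also have "\<dots> = y' I ^ (\<Sum>i\<in>I. nat (h i))" by (simp add: power_sum)
    also have "\<dots> = y' I ^ nat (\<Sum>i\<in>I. h i)" using nat_sum_signed[of I h] I fI assms(5) by auto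
    finally show "(\<Prod>i\<in>I. y i ^ nat (h i)) = y' I ^ nat (\<Sum>i\<in>I. h i)" .
  qed
  also have "\<dots> = (\<Prod>I\<in>{I\<in>Os. (\<Sum>i\<in>I. h i) > 0}. y' I ^ nat (\<Sum>i\<in>I. h i))"
  proof (rule prod.mono_neutral_right)
    show "\<forall>I\<in>Os - {I \<in> Os. 0 < (\<Sum>i\<in>I. h i)}. y' I ^ nat (\<Sum>i\<in>I. h i) = 1"
    proof
      fix I assume "I \<in> Os - {I \<in> Os. 0 < (\<Sum>i\<in>I. h i)}"
      hence "nat (\<Sum>i\<in>I. h i) = 0" by auto
      thus "y' I ^ nat (\<Sum>i\<in>I. h i) = 1" by simp
    qed
  qed (use fO in auto)
  finally show ?thesis .
qed

lemma free_nz: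
  assumes "is_subfield k" "free_generating k m x" "i \<in> {1..m}"
  shows "x i \<noteq> 0"
proof
  assume x0: "x i = 0"
  define d where "d = (\<lambda>j::nat. if j = i then 1 else (0::nat))"
  define c where "c = (\<lambda>e. if e = d then 1 else (0::'a))"
  have sup: "{e. c e \<noteq> 0} = {d}" unfolding c_def by auto
  have "is_poly k m c" unfolding is_poly_def sup using assms(1,3)
    by (auto simp: c_def d_def is_subfield_def)
  moreover have "poly_eval c m x = x i"
  proof -
    have "poly_eval c m x = (\<Prod>j\<in>{1..m}. x j ^ d j)" unfolding poly_eval_def sup by (simp add: c_def)
    also have "\<dots> = (\<Prod>j\<in>{1..m}. if j = i then x j else 1)" by (rule prod.cong) (auto simp: d_def)
    also have "\<dots> = x i" using assms(3) by simp
    finally show ?thesis .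
  qed
  ultimately have "\<forall>e. c e = 0" using assms(2) x0 unfolding free_generating_def by auto
  thus False unfolding c_def by (metis one_neq_zero)
qed

lemma sf_pow:
  assumes "semifield_hom_on (sf_closure m u) \<psi>" "1 \<in> sf_closure m u" "\<psi> 1 = 1" "a \<in> sf_closure m u"
  shows "a ^ n \<in> sf_closure m u \<and> \<psi> (a ^ n) = \<psi> a ^ n"
proof (induction n)
  case 0 then show ?case using assms by simp
next
  case (Suc n)
  then show ?case using assms sf_closure.mult[of a m u "a^n"] unfolding semifield_hom_on_def by auto
qed

lemma sf_prod:
  assumes "semifield_hom_on (sf_closure m u) \<psi>" "1 \<in> sf_closure m u" "\<psi> 1 = 1" "finite A"
    "\<forall>i\<in>A. f i \<in> sf_closure m u"
  shows "prod f A \<in> sf_closure m u \<and> \<psi> (prod f A) = (\<Prod>i\<in>A. \<psi> (f i))"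
  using assms(4,5)
proof (induction A rule: finite_induct)
  case empty then show ?case using assms by simp
next
  case (insert a A)
  then show ?case using assms sf_closure.mult[of "f a" m u "prod f A"] unfolding semifield_hom_on_def by auto
qed

theorem lemma4p4p8:
  fixes G :: "('g, 'c) monoid_scheme" and \<phi> :: "'g \<Rightarrow> nat \<Rightarrow> nat"
    and m n mG :: nat and Q :: "nat \<Rightarrow> nat \<Rightarrow> nat"
    and kF :: "'a::field_char_0 set" and u x :: "nat \<Rightarrow> 'a"
    and kG :: "'b::field_char_0 set" and v :: "nat \<Rightarrow> 'b"
    and \<psi> :: "'a \<Rightarrow> 'b" and K :: "nat set"
  assumes nm: "n \<le> m"
    and action: "group_action G {1..m} \<phi>"
    and mutable_stable: "\<forall>g\<in>carrier G. \<phi> g ` {1..n} \<subseteq> {1..n}"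
    and mG: "mG = card (orbits G {1..m} \<phi>)"
    and F: "rational_function_field kF m u"
    and FG: "rational_function_field kG mG v"
    and psi_hom: "semifield_hom_on (sf_closure m u) \<psi>"
    and psi_surj: "\<psi> ` sf_closure m u = sf_closure mG v"
    and quiver: "is_quiver m Q"
    and seed: "free_generating kF m x"
    and adm: "Gpsi_admissible G \<phi> m n (sf_closure m u) \<psi> (x, Btil Q)"
    and K: "K \<in> orbits G {1..n} \<phi>"
    and mutQ_adm: "quiver_G_admissible G \<phi> m n (quiver_mut_set K Q)"
  shows "Gpsi_admissible G \<phi> m n (sf_closure m u) \<psi> (seed_mut_set {1..m} K (x, Btil Q))
       \<and> folded_seed_eq (orbits G {1..m} \<phi>) (orbits G {1..n} \<phi>)
           (fold_seed \<psi> (seed_mut_set {1..m} K (x, Btil Q)))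
           (seed_mut (orbits G {1..m} \<phi>) K (fold_seed \<psi> (x, Btil Q)))"
proof -
  interpret ga: group_action G "{1..m}" \<phi> by (rule action)
  have grp: "group G" using ga.group_hom group_hom.axioms(1) by blast
  define B where "B = Btil Q"
  define S where "S = sf_closure m u"
  define Orbs where "Orbs = orbits G {1..m} \<phi>"
  have admB: "G_admissible G \<phi> m n B" using adm by (simp add: Gpsi_admissible_def B_def)
  have a2: "\<forall>g\<in>carrier G. \<forall>i\<in>{1..m}. \<forall>j\<in>{1..n}. B i j = B (\<phi> g i) (\<phi> g j)"
    and a3: "\<forall>i\<in>{1..n}. \<forall>i'\<in>orbit G \<phi> i. B i i' = 0"
    and a4: "\<forall>i\<in>{1..m}. \<forall>i'\<in>orbit G \<phi> i. \<forall>j\<in>{1..n}. B i j * B i' j \<ge> 0"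
    using admB unfolding G_admissible_def by auto
  have xS: "\<forall>i\<in>{1..m}. x i \<in> S" and xpsi: "\<forall>i\<in>{1..m}. \<forall>i'\<in>orbit G \<phi> i. \<psi> (x i) = \<psi> (x i')"
    using adm unfolding Gpsi_admissible_def S_def by auto
  have orb_sub: "orbit G \<phi> a \<subseteq> {1..m}" if "a \<in> {1..m}" for a
    using ga.element_image that unfolding orbit_def by blast
  have orb_eq: "orbit G \<phi> b = orbit G \<phi> a" if "a \<in> {1..m}" "b \<in> orbit G \<phi> a" for a b
  proof -
    have b: "b \<in> {1..m}" using orb_sub that by blast
    have ab: "a \<in> orbit G \<phi> b" using ga.orbit_sym[OF that(1) b that(2)] .
    show ?thesis
    proof
      show "orbit G \<phi> b \<subseteq> orbit G \<phi> a"
        using ga.orbit_trans[OF that(1) b _ that(2)] orb_sub[OF b] by blast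
      show "orbit G \<phi> a \<subseteq> orbit G \<phi> b"
        using ga.orbit_trans[OF b that(1) _ ab] orb_sub[OF that(1)] by blast
    qed
  qed
  have orb_n: "orbit G \<phi> a \<subseteq> {1..n}" if "a \<in> {1..n}" for a
    using mutable_stable that unfolding orbit_def by blast
  obtain kk where kk: "kk \<in> {1..n}" "K = orbit G \<phi> kk" using K unfolding orbits_def by blast
  have Kn: "K \<subseteq> {1..n}" using orb_n kk by auto
  have Km: "K \<subseteq> {1..m}" using Kn nm by auto
  have fK: "finite K" using Kn finite_subset by blast
  have KO: "K \<in> Orbs" using kk nm unfolding Orbs_def orbits_def by auto
  have kkK: "kk \<in> K" using kk ga.orbit_refl[of kk] nm by auto
  define k0 where "k0 = (SOME k. k \<in> K)"
  have k0K: "k0 \<in> K" unfolding k0_def using kkK by (rule someI)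
  have Kz: "\<forall>a\<in>K. \<forall>b\<in>K. B a b = 0"
  proof (intro ballI)
    fix a b assume "a \<in> K" "b \<in> K"
    hence "orbit G \<phi> a = K" using orb_eq[of kk a] kk nm by auto
    thus "B a b = 0" using a3 \<open>a \<in> K\<close> \<open>b \<in> K\<close> Kn by auto
  qed
  have fO: "finite Orbs"
  proof -
    have "Orbs \<subseteq> Pow {1..m}" unfolding Orbs_def orbits_def using orb_sub by auto
    thus ?thesis using finite_subset by blast
  qed
  have UO: "\<Union>Orbs = {1..m}" unfolding Orbs_def by (rule ga.orbits_coverture)
  have dO: "\<forall>I\<in>Orbs. \<forall>J\<in>Orbs. I \<noteq> J \<longrightarrow> I \<inter> J = {}" unfolding Orbs_def using ga.disjoint_union by blast
  have Omem: "I = orbit G \<phi> i" if IO: "I \<in> Orbs" and iI: "i \<in> I" for I i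
  proof -
    obtain a where a: "a \<in> {1..m}" "I = orbit G \<phi> a" using IO unfolding Orbs_def orbits_def by blast
    thus ?thesis using orb_eq[of a i] iI by auto
  qed
  have Osub: "I \<subseteq> {1..m}" if "I \<in> Orbs" for I using UO that by blast
  have Ocl: "\<phi> g i \<in> I" if "I \<in> Orbs" "i \<in> I" "g \<in> carrier G" for I i g
    using Omem[OF that(1,2)] that unfolding orbit_def by blast
  have sign: "(\<forall>i\<in>I. B i j \<ge> 0) \<or> (\<forall>i\<in>I. B i j \<le> 0)" if "I \<in> Orbs" "j \<in> {1..n}" for I j
  proof (cases "\<exists>i1\<in>I. B i1 j > 0")
    case True
    then obtain i1 where i1: "i1 \<in> I" "B i1 j > 0" by blast
    have "B i j \<ge> 0" if "i \<in> I" for i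
    proof -
      have "B i1 j * B i j \<ge> 0" using a4 Osub[OF \<open>I \<in> Orbs\<close>] i1 that \<open>j \<in> {1..n}\<close>
        Omem[OF \<open>I \<in> Orbs\<close> i1(1)] by auto
      thus ?thesis using i1(2) by (simp add: zero_le_mult_iff)
    qed
    thus ?thesis by blast
  next
    case False thus ?thesis by (auto simp: not_less)
  qed
  have indep: "(\<Sum>i\<in>I. B i k) = (\<Sum>i\<in>I. B i k0)" if "I \<in> Orbs" "k \<in> K" for I k
  proof -
    have "k \<in> orbit G \<phi> k0" using Omem[OF KO k0K] that(2) by simp
    then obtain g where g: "g \<in> carrier G" "k = \<phi> g k0" unfolding orbit_def by blast
    have ig: "inv\<^bsub>G\<^esub> g \<in> carrier G" using g grp by (simp add: group.inv_closed)
    have k0b: "\<phi> (inv\<^bsub>G\<^esub> g) k = k0" using ga.orbit_sym_aux[OF g(1) _ g(2)[symmetric]] k0K Km by auto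
    have "(\<Sum>i\<in>I. B i k) = (\<Sum>i\<in>I. B (\<phi> (inv\<^bsub>G\<^esub> g) i) k0)"
    proof (rule sum.cong[OF refl])
      fix i assume "i \<in> I"
      thus "B i k = B (\<phi> (inv\<^bsub>G\<^esub> g) i) k0" using a2 ig Osub[OF that(1)] Kn that(2) k0b by force
    qed
    also have "\<dots> = (\<Sum>i\<in>I. B i k0)"
    proof (rule sum.reindex_bij_witness[where i="\<phi> g" and j="\<phi> (inv\<^bsub>G\<^esub> g)"])
      fix a assume a: "a \<in> I"
      hence am: "a \<in> {1..m}" using Osub[OF that(1)] by blast
      show "\<phi> g (\<phi> (inv\<^bsub>G\<^esub> g) a) = a"
        using ga.orbit_sym_aux[OF ig am refl] grp g(1) by (simp add: group.inv_inv)
      show "\<phi> (inv\<^bsub>G\<^esub> g) a \<in> I" using Ocl[OF that(1) a ig] .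
      show "\<phi> (inv\<^bsub>G\<^esub> g) (\<phi> g a) = a" using ga.orbit_sym_aux[OF g(1) am refl] .
      show "\<phi> g a \<in> I" using Ocl[OF that(1) a g(1)] .
      show "B (\<phi> (inv\<^bsub>G\<^esub> g) a) k0 = B (\<phi> (inv\<^bsub>G\<^esub> g) a) k0" by simp
    qed
    finally show ?thesis .
  qed

  define L where "L = sorted_list_of_set K"
  have L: "distinct L" "set L = K" using fK by (auto simp: L_def)
  define x' where "x' = (\<lambda>i. if i \<in> K then clus_mut {1..m} i B x i else x i)"
  define B' where "B' = (\<lambda>i j. if i \<in> K \<or> j \<in> K then - B i j else B i j + (\<Sum>k\<in>K. ff (B i k) (B k j)))"
  have Bfold: "foldl (\<lambda>B k. mat_mut k B) B L = B'"
    using mat_fold[OF L(1) _ Kz] L(2) unfolding B'_def by auto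
  have Sm: "seed_mut_set {1..m} K (x, Btil Q) = (x', B')"
    unfolding seed_mut_set_def B_def[symmetric] L_def[symmetric]
    using seed_fold[OF L(1) _ Kz, of "{1..m}" x] L(2) Bfold unfolding x'_def by auto
  have ncQ: "nocyc Q" using quiver unfolding is_quiver_def nocyc_def by auto
  have B'Q: "B' = Btil (quiver_mut_set K Q)"
    unfolding quiver_mut_set_def L_def[symmetric] Btil_fold[OF ncQ] B_def[symmetric] Bfold ..
  have m1: "1 \<in> {1..m}" using k0K Km by auto
  have u1: "u 1 \<noteq> 0" using free_nz[of kF m u 1] F m1 unfolding rational_function_field_def by auto
  have oneS: "1 \<in> S" using sf_closure.divide[OF sf_closure.gen[OF m1, of u] sf_closure.gen[OF m1, of u]] u1
    unfolding S_def by simp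
  have psi1: "\<psi> 1 = 1"
  proof (rule ccontr)
    assume ne: "\<psi> 1 \<noteq> 1"
    have e1: "(1::'a) = u 1 / u 1" using u1 by simp
    have "\<psi> 1 = \<psi> (u 1) / \<psi> (u 1)" using psi_hom sf_closure.gen[OF m1, of u]
      unfolding semifield_hom_on_def by (subst e1) blast
    hence p0: "\<psi> 1 = 0" using ne by (cases "\<psi> (u 1) = 0") auto
    have all0: "\<psi> a = 0" if "a \<in> S" for a
      using psi_hom that oneS p0 unfolding semifield_hom_on_def S_def by (metis mult.right_neutral mult_zero_right)
    have "mG \<ge> 1" unfolding mG Orbs_def[symmetric] using fO KO by (metis One_nat_def Suc_leI card_gt_0_iff empty_iff)
    hence "v 1 \<in> sf_closure mG v" by (intro sf_closure.gen) auto
    hence "v 1 = 0" using psi_surj all0 unfolding S_def by auto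
    moreover have "v 1 \<noteq> 0" using free_nz[of kG mG v 1] FG \<open>mG \<ge> 1\<close> unfolding rational_function_field_def by auto
    ultimately show False by simp
  qed
  have hom: "semifield_hom_on S \<psi>" using psi_hom S_def by simp
  define yG where "yG = fold_clus \<psi> x"
  define bG where "bG = fold_mat B"
  have bGK: "bG I K = (\<Sum>i\<in>I. B i k0)" for I unfolding bG_def fold_mat_def k0_def ..
  have yrep: "\<psi> (x i) = yG I" if "I \<in> Orbs" "i \<in> I" for I i
  proof -
    have r: "(SOME i. i \<in> I) \<in> I" using that(2) by (rule someI)
    show ?thesis unfolding yG_def fold_clus_def using xpsi Osub[OF that(1)] that(2) r Omem[OF that] by auto
  qed
  define T where "T = ((\<Prod>I\<in>{I\<in>Orbs. bG I K > 0}. yG I ^ nat (bG I K)) +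
     (\<Prod>I\<in>{I\<in>Orbs. bG I K < 0}. yG I ^ nat (- bG I K))) / yG K"
  have key: "x' k \<in> S \<and> \<psi> (x' k) = T" if kK: "k \<in> K" for k
  proof -
    define P where "P = (\<Prod>i\<in>{i\<in>{1..m}. B i k > 0}. x i ^ nat (B i k))"
    define M where "M = (\<Prod>i\<in>{i\<in>{1..m}. B i k < 0}. x i ^ nat (- B i k))"
    have x'k: "x' k = (P + M) / x k" using kK unfolding x'_def clus_mut_def P_def M_def by simp
    have kn: "k \<in> {1..n}" using kK Kn by auto
    have pw: "x i ^ e \<in> S \<and> \<psi> (x i ^ e) = \<psi> (x i) ^ e" if "i \<in> {1..m}" for i e
      using sf_pow[of m u \<psi> "x i" e] psi_hom oneS psi1 xS that unfolding S_def by auto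
    have P1: "P \<in> S \<and> \<psi> P = (\<Prod>i\<in>{i\<in>{1..m}. B i k > 0}. \<psi> (x i) ^ nat (B i k))"
      using sf_prod[of m u \<psi> "{i\<in>{1..m}. B i k > 0}" "\<lambda>i. x i ^ nat (B i k)"] psi_hom oneS psi1 pw
      unfolding P_def S_def by auto
    have M1: "M \<in> S \<and> \<psi> M = (\<Prod>i\<in>{i\<in>{1..m}. B i k < 0}. \<psi> (x i) ^ nat (- B i k))"
      using sf_prod[of m u \<psi> "{i\<in>{1..m}. B i k < 0}" "\<lambda>i. x i ^ nat (- B i k)"] psi_hom oneS psi1 pw
      unfolding M_def S_def by auto
    have yy: "\<forall>I\<in>Orbs. \<forall>i\<in>I. (\<psi> \<circ> x) i = yG I" using yrep by auto
    have P2: "\<psi> P = (\<Prod>I\<in>{I\<in>Orbs. bG I K > 0}. yG I ^ nat (bG I K))"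
    proof -
      have "\<psi> P = (\<Prod>I\<in>{I\<in>Orbs. (\<Sum>i\<in>I. B i k) > 0}. yG I ^ nat (\<Sum>i\<in>I. B i k))"
        using P1 prod_fold[OF _ UO dO yy, of "\<lambda>i. B i k"] sign kn by auto
      also have "\<dots> = (\<Prod>I\<in>{I\<in>Orbs. bG I K > 0}. yG I ^ nat (bG I K))"
      proof -
        have se: "{I\<in>Orbs. (\<Sum>i\<in>I. B i k) > 0} = {I\<in>Orbs. bG I K > 0}" using indep kK bGK by auto
        show ?thesis unfolding se by (rule prod.cong) (use indep kK bGK in auto)
      qed
      finally show ?thesis .
    qed
    have sign': "\<forall>I\<in>Orbs. (\<forall>i\<in>I. - B i k \<ge> 0) \<or> (\<forall>i\<in>I. - B i k \<le> 0)"
      using sign kn by fastforce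
    have M2: "\<psi> M = (\<Prod>I\<in>{I\<in>Orbs. bG I K < 0}. yG I ^ nat (- bG I K))"
    proof -
      have "\<psi> M = (\<Prod>I\<in>{I\<in>Orbs. (\<Sum>i\<in>I. - B i k) > 0}. yG I ^ nat (\<Sum>i\<in>I. - B i k))"
        using M1 prod_fold[OF _ UO dO yy sign'] by auto
      also have "\<dots> = (\<Prod>I\<in>{I\<in>Orbs. bG I K < 0}. yG I ^ nat (- bG I K))"
      proof -
        have se: "{I\<in>Orbs. (\<Sum>i\<in>I. - B i k) > 0} = {I\<in>Orbs. bG I K < 0}" using indep kK bGK by (auto simp: sum_negf)
        show ?thesis unfolding se by (rule prod.cong) (use indep kK bGK in \<open>auto simp: sum_negf\<close>)
      qed
      finally show ?thesis .
    qed
    have xk: "\<psi> (x k) = yG K" using yrep[OF KO kK] .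
    have "P + M \<in> S" using P1 M1 unfolding S_def by (auto intro: sf_closure.add)
    hence "x' k \<in> S" using x'k xS Km kK unfolding S_def by (auto intro: sf_closure.divide)
    moreover have "\<psi> (x' k) = T"
      using x'k hom \<open>P + M \<in> S\<close> P1 M1 xS Km kK unfolding semifield_hom_on_def T_def P2[symmetric] M2[symmetric] xk[symmetric]
      by auto
    ultimately show ?thesis ..
  qed
  have x'nK: "x' i = x i" if "i \<notin> K" for i using that unfolding x'_def by simp
  have OK: "i \<notin> K" if "I \<in> Orbs" "I \<noteq> K" "i \<in> I" for I i
    using dO KO that by blast
  have part1: "Gpsi_admissible G \<phi> m n (sf_closure m u) \<psi> (x', B')"
    unfolding Gpsi_admissible_def fst_conv snd_conv
  proof (intro conjI)
    show "G_admissible G \<phi> m n B'" using mutQ_adm B'Q by (simp add: quiver_G_admissible_def)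
    show "\<forall>i\<in>{1..m}. x' i \<in> sf_closure m u"
    proof
      fix i assume "i \<in> {1..m}"
      thus "x' i \<in> sf_closure m u" using key xS x'nK unfolding S_def by (cases "i \<in> K") auto
    qed
    show "\<forall>i\<in>{1..m}. \<forall>i'\<in>orbit G \<phi> i. \<psi> (x' i) = \<psi> (x' i')"
    proof (intro ballI)
      fix i i' assume i: "i \<in> {1..m}" and i': "i' \<in> orbit G \<phi> i"
      have IO: "orbit G \<phi> i \<in> Orbs" using i unfolding Orbs_def orbits_def by blast
      have ii: "i \<in> orbit G \<phi> i" using ga.orbit_refl i .
      show "\<psi> (x' i) = \<psi> (x' i')"
      proof (cases "i \<in> K")
        case True
        hence "orbit G \<phi> i = K" using Omem[OF KO True] by simp
        thus ?thesis using key True i' by auto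
      next
        case False
        hence ne: "orbit G \<phi> i \<noteq> K" using ii by auto
        have "i' \<notin> K" using OK[OF IO ne i'] .
        thus ?thesis using False x'nK xpsi i i' by auto
      qed
    qed
  qed
  have cm: "clus_mut Orbs K bG yG = yG(K := T)" unfolding clus_mut_def T_def ..
  have part2: "folded_seed_eq Orbs (orbits G {1..n} \<phi>) (fold_clus \<psi> x', fold_mat B') (clus_mut Orbs K bG yG, mat_mut K bG)"
    unfolding folded_seed_eq_def fst_conv snd_conv
  proof (intro conjI ballI)
    fix I assume IO: "I \<in> Orbs"
    define r where "r = (SOME i. i \<in> I)"
    obtain a where a: "a \<in> {1..m}" "I = orbit G \<phi> a" using IO unfolding Orbs_def orbits_def by blast
    hence aI: "a \<in> I" using ga.orbit_refl by simp
    have rI: "r \<in> I" unfolding r_def using aI by (rule someI)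
    show "fold_clus \<psi> x' I = clus_mut Orbs K bG yG I"
    proof (cases "I = K")
      case True
      thus ?thesis unfolding cm fold_clus_def r_def[symmetric] using key rI by simp
    next
      case False
      have "r \<notin> K" using OK[OF IO False rI] .
      have "clus_mut Orbs K bG yG I = yG I" using cm False by simp
      thus ?thesis unfolding fold_clus_def yG_def using \<open>r \<notin> K\<close> x'nK r_def by simp
    qed
  next
    fix I J assume IO: "I \<in> Orbs" and JM: "J \<in> orbits G {1..n} \<phi>"
    obtain jj where jj: "jj \<in> {1..n}" "J = orbit G \<phi> jj" using JM unfolding orbits_def by blast
    have JO: "J \<in> Orbs" using jj nm unfolding Orbs_def orbits_def by auto
    have jjJ: "jj \<in> J" using jj ga.orbit_refl[of jj] nm by auto
    define j0 where "j0 = (SOME j. j \<in> J)"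
    have j0J: "j0 \<in> J" unfolding j0_def using jjJ by (rule someI)
    have j0n: "j0 \<in> {1..n}" using j0J jj orb_n[OF jj(1)] by blast
    have fI: "finite I" using Osub[OF IO] finite_subset by blast
    have LHS: "fold_mat B' I J = (\<Sum>i\<in>I. B' i j0)" unfolding fold_mat_def j0_def ..
    have bGJ: "bG I' J = (\<Sum>i\<in>I'. B i j0)" for I' unfolding bG_def fold_mat_def j0_def ..
    show "fold_mat B' I J = mat_mut K bG I J"
    proof (cases "I = K \<or> J = K")
      case True
      have "B' i j0 = - B i j0" if "i \<in> I" for i using True that j0J unfolding B'_def by auto
      hence "fold_mat B' I J = - bG I J" unfolding LHS bGJ by (simp add: sum_negf)
      thus ?thesis unfolding mat_mut_def using True by simp
    next
      case False
      have j0K: "j0 \<notin> K" using OK[OF JO _ j0J] False by auto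
      have "(\<Sum>i\<in>I. B' i j0) = (\<Sum>i\<in>I. B i j0 + (\<Sum>k\<in>K. ff (B i k) (B k j0)))"
        by (rule sum.cong[OF refl]) (use OK[OF IO] False j0K in \<open>auto simp: B'_def\<close>)
      also have "\<dots> = bG I J + (\<Sum>k\<in>K. \<Sum>i\<in>I. ff (B i k) (B k j0))"
        by (simp add: sum.distrib bGJ sum.swap[of _ K I])
      also have "(\<Sum>k\<in>K. \<Sum>i\<in>I. ff (B i k) (B k j0)) = (\<Sum>k\<in>K. ff (\<Sum>i\<in>I. B i k) (B k j0))"
      proof (rule sum.cong[OF refl], rule ff_sum1[OF fI])
        fix k assume "k \<in> K"
        hence "k \<in> {1..n}" using Kn by blast
        thus "(\<forall>a\<in>I. 0 \<le> B a k) \<or> (\<forall>a\<in>I. B a k \<le> 0)" by (rule sign[OF IO])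
      qed
      also have "\<dots> = (\<Sum>k\<in>K. ff (bG I K) (B k j0))"
        using indep[OF IO] bGK by simp
      also have "\<dots> = ff (bG I K) (\<Sum>k\<in>K. B k j0)"
        by (rule ff_sum2[OF fK sign[OF KO j0n]])
      also have "(\<Sum>k\<in>K. B k j0) = bG K J" using bGJ by simp
      finally show ?thesis unfolding LHS mat_mut_def ff_def using False by simp
    qed
  qed
  have Sm': "seed_mut_set {1..m} K (x, B) = (x', B')" using Sm B_def by simp
  show ?thesis
    using part1 part2 unfolding Sm Sm' fold_seed_def fst_conv snd_conv seed_mut_def Orbs_def[symmetric]
      B_def[symmetric] bG_def[symmetric] yG_def[symmetric] by simp
qed

end
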